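(* Let $k\ge3$ and $q=2^{-1/k}$. Then the code $G_k\cdot G_k$, which encodes $(i,j)\in\mathcal{A}$ as the concatenation $G_k(i)G_k(j)$, is not optimal for $\mathrm{TDGD}(q)$.
   Context: $\mathcal{A}=\{(i,j): i,j\in\mathbb{Z}_{\ge 0}\}$; $\mathrm{TDGD}(q)$ is the distribution $P(i,j)=(1-q)^2q^{i+j}$ on $\mathcal{A}$; optimal means minimal expected codeword length among binary prefix codes for $\mathcal{A}$. For $N\ge1$, the quasi-uniform code $Q_N$ on symbols $0,\dots,N-1$ assigns $2^{\lceil\log_2N\rceil}-N$ codewords of length $\lfloor\log_2 N\rfloor$ to the first (smallest) symbols and codewords of length $\lceil\log_2N\rceil$ to the remaining $2N-2^{\lceil\log_2N\rceil}$ symbols. The Golomb code of order $k$ is $G_k(i)=Q_k(i\bmod k)\cdot u(\lfloor i/k\rfloor)$, where $u(n)$ is $n$ ones followed by a zero. *)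

theory Defs
  imports "HOL-Analysis.Analysis" "HOL-Library.Sublist" "HOL-Library.Extended_Nonnegative_Real"
begin

type_synonym symbol = "nat \<times> nat"
type_synonym codeword = "bool list"

text \<open>Binary prefix code for the alphabet nat x nat: no codeword is a prefix of
  another one (non-strict prefix, hence the code is also injective).\<close>
definition prefix_code :: "(symbol \<Rightarrow> codeword) \<Rightarrow> bool" where
  "prefix_code c \<longleftrightarrow> (\<forall>a b. a \<noteq> b \<longrightarrow> \<not> prefix (c a) (c b))"

definition exp_len :: "(symbol \<Rightarrow> real) \<Rightarrow> (symbol \<Rightarrow> codeword) \<Rightarrow> ennreal" where
  "exp_len P c = (\<Sum>\<^sub>\<infinity>a\<in>UNIV. ennreal (P a * real (length (c a))))"

definition optimal :: "(symbol \<Rightarrow> real) \<Rightarrow> (symbol \<Rightarrow> codeword) \<Rightarrow> bool" where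
  "optimal P c \<longleftrightarrow> prefix_code c \<and>
     (\<forall>c'. prefix_code c' \<longrightarrow> exp_len P c \<le> exp_len P c')"

definition TDGD :: "real \<Rightarrow> symbol \<Rightarrow> real" where
  "TDGD q = (\<lambda>(i, j). (1 - q)^2 * q ^ (i + j))"

fun bin :: "nat \<Rightarrow> nat \<Rightarrow> codeword" where
  "bin 0 v = []"
| "bin (Suc n) v = (odd (v div 2 ^ n)) # bin n v"

definition flog2 :: "nat \<Rightarrow> nat" where "flog2 N = nat \<lfloor>log 2 (real N)\<rfloor>"
definition clog2 :: "nat \<Rightarrow> nat" where "clog2 N = nat \<lceil>log 2 (real N)\<rceil>"

text \<open>Quasi-uniform (truncated binary) code on 0..N-1: the first 2^ceil(log N) - N
  symbols get floor(log N)-bit codewords, the remaining ones ceil(log N)-bit codewords.\<close>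
definition QU :: "nat \<Rightarrow> nat \<Rightarrow> codeword" where
  "QU N i = (let u = 2 ^ clog2 N - N in
             if i < u then bin (flog2 N) i else bin (clog2 N) (i + u))"

definition unary :: "nat \<Rightarrow> codeword" where
  "unary n = replicate n True @ [False]"

definition golomb :: "nat \<Rightarrow> nat \<Rightarrow> codeword" where
  "golomb k i = QU k (i mod k) @ unary (i div k)"

definition golomb_pair :: "nat \<Rightarrow> symbol \<Rightarrow> codeword" where
  "golomb_pair k = (\<lambda>(i, j). golomb k i @ golomb k j)"

end

theory Submission
  imports Defs
begin

lemma len_bin: "length (bin n v) = n" by (induction n) auto

lemma len_QU: "length (QU N i) = (if i < 2 ^ clog2 N - N then flog2 N else clog2 N)"
  by (simp add: QU_def Let_def len_bin)

lemma len_golomb: "length (golomb k i) = length (QU k (i mod k)) + i div k + 1"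
  by (simp add: golomb_def unary_def)

lemma len_pair: "length (golomb_pair k (i,j)) = length (golomb k i) + length (golomb k j)"
  by (simp add: golomb_pair_def)

lemma flog2_le: assumes "k \<ge> 1" shows "2 ^ flog2 k \<le> k"
proof -
  have l0: "log 2 (real k) \<ge> 0" using assms by simp
  have "real (2 ^ flog2 k) = 2 powr real (flog2 k)" by (simp add: powr_realpow)
  also have "real (flog2 k) = real_of_int \<lfloor>log 2 (real k)\<rfloor>" using l0 by (simp add: flog2_def)
  also have "2 powr \<dots> \<le> 2 powr (log 2 (real k))" by simp
  also have "\<dots> = real k" using assms by simp
  finally show ?thesis by linarith
qed

lemma clog2_bounds: assumes "k \<ge> 1" shows "k \<le> 2 ^ clog2 k" "2 ^ clog2 k < 2 * k"
proof -
  have l0: "log 2 (real k) \<ge> 0" using assms by simp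
  have e0: "real (clog2 k) = real_of_int \<lceil>log 2 (real k)\<rceil>" using l0 by (simp add: clog2_def)
  have e: "real (2 ^ clog2 k) = 2 powr real_of_int \<lceil>log 2 (real k)\<rceil>"
    unfolding e0[symmetric] by (simp add: powr_realpow)
  have "real k = 2 powr (log 2 (real k))" using assms by simp
  also have "\<dots> \<le> 2 powr real_of_int \<lceil>log 2 (real k)\<rceil>" by simp
  finally show "k \<le> 2 ^ clog2 k" using e by linarith
  have "2 powr real_of_int \<lceil>log 2 (real k)\<rceil> < 2 powr (log 2 (real k) + 1)"
    by (intro powr_less_mono) linarith+
  also have "\<dots> = 2 * real k" using assms by (simp add: powr_add)
  finally show "2 ^ clog2 k < 2 * k" using e by linarith
qed

lemma swap_improves:
  fixes P :: "symbol \<Rightarrow> real" and c :: "symbol \<Rightarrow> codeword"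
  assumes fin: "exp_len P c \<noteq> \<infinity>" and ab: "a \<noteq> b" and Pab: "P a > P b" "P b \<ge> 0"
    and lab: "length (c a) > length (c b)"
  shows "\<not> optimal P c"
proof
  assume opt: "optimal P c"
  define \<sigma> where "\<sigma> x = (if x = a then b else if x = b then a else x)" for x
  define c' where "c' = c \<circ> \<sigma>"
  have inj: "\<sigma> x \<noteq> \<sigma> y" if "x \<noteq> y" for x y using that ab by (auto simp: \<sigma>_def)
  have pc: "prefix_code c" using opt by (simp add: optimal_def)
  have pc': "prefix_code c'" unfolding prefix_code_def
  proof (intro allI impI)
    fix x y :: symbol assume "x \<noteq> y"
    hence "\<sigma> x \<noteq> \<sigma> y" by (rule inj)
    thus "\<not> prefix (c' x) (c' y)" using pc unfolding prefix_code_def c'_def comp_def by blast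
  qed
  define F where "F (d :: symbol \<Rightarrow> codeword) x = ennreal (P x * real (length (d x)))" for d x
  define R where "R = UNIV - {a, b}"
  have U: "(UNIV :: symbol set) = insert a (insert b R)" by (auto simp: R_def)
  have E: "exp_len P d = F d a + (F d b + infsum (F d) R)" for d
  proof -
    have "exp_len P d = infsum (F d) (insert a (insert b R))" unfolding exp_len_def F_def U[symmetric] ..
    also have "\<dots> = F d a + infsum (F d) (insert b R)"
      by (rule infsum_insert[OF nonneg_summable_on_complete]) (auto simp: R_def ab)
    also have "infsum (F d) (insert b R) = F d b + infsum (F d) R"
      by (rule infsum_insert[OF nonneg_summable_on_complete]) (auto simp: R_def)
    finally show ?thesis .
  qed
  have SR: "infsum (F c') R = infsum (F c) R"
    by (rule infsum_cong) (auto simp: R_def F_def c'_def \<sigma>_def)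
  have Pa: "P a \<ge> 0" using Pab by linarith
  have key: "P a * real (length (c b)) + P b * real (length (c a)) <
             P a * real (length (c a)) + P b * real (length (c b))"
  proof -
    have "0 < (P a - P b) * (real (length (c a)) - real (length (c b)))"
      using Pab lab by (intro mult_pos_pos) auto
    thus ?thesis by (simp add: algebra_simps)
  qed
  have X: "F c' a + F c' b < F c a + F c b"
    using key Pa Pab ab by (simp add: F_def c'_def \<sigma>_def ennreal_plus[symmetric] ennreal_less_iff
        del: ennreal_plus)
  have Rfin: "infsum (F c) R \<noteq> \<infinity>" using fin E[of c] by (auto simp: top_unique)
  have "exp_len P c' < exp_len P c"
  proof -
    have "exp_len P c' = infsum (F c) R + (F c' a + F c' b)" using E[of c'] SR by (simp add: ac_simps)
    also have "\<dots> < infsum (F c) R + (F c a + F c b)"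
      using Rfin X by (simp add: ennreal_add_left_cancel_less)
    also have "\<dots> = exp_len P c" using E[of c] by (simp add: ac_simps)
    finally show ?thesis .
  qed
  with opt pc' show False unfolding optimal_def by (meson not_le)
qed

lemma len_golomb_le: assumes "k \<ge> 1" shows "length (golomb k i) \<le> 2 * k + 1 + i"
proof -
  have f: "flog2 k < 2 * k" using flog2_le[OF assms] less_exp[of "flog2 k"] by linarith
  have c: "clog2 k < 2 * k" using clog2_bounds(2)[OF assms] less_exp[of "clog2 k"] by linarith
  have "length (QU k (i mod k)) \<le> 2 * k" using f c by (simp add: len_QU)
  moreover have "i div k \<le> i" by simp
  ultimately show ?thesis unfolding len_golomb by linarith
qed

lemma exp_len_fin:
  assumes q: "0 < q" "q < 1" and k: "k \<ge> 1"
  shows "exp_len (TDGD q) (golomb_pair k) \<noteq> \<infinity>"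
proof -
  define h where "h n = real (Suc n) * q ^ n" for n
  define S where "S = 1 / (1 - q)^2"
  have hs: "(h has_sum S) UNIV"
    unfolding h_def S_def using q
    by (intro sums_nonneg_imp_has_sum geometric_deriv_sums) auto
  define C where "C = (1 - q)^2 * (2 * real (2 * k + 1))"
  have C0: "C \<ge> 0" by (simp add: C_def)
  define g where "g = (\<lambda>(i, j). C * (h i * h j))"
  have gs: "g summable_on UNIV"
  proof -
    have "g summable_on Sigma UNIV (\<lambda>_. UNIV)"
    proof (rule summable_on_SigmaI)
      fix i :: nat
      show "((\<lambda>j. g (i, j)) has_sum (C * h i * S)) UNIV"
        unfolding g_def using has_sum_cmult_right[OF hs, of "C * h i"] by (simp add: mult.assoc)
    next
      show "(\<lambda>i. C * h i * S) summable_on UNIV"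
        using hs by (intro summable_on_cmult_left summable_on_cmult_right) (auto simp: summable_on_def)
    next
      fix i j :: nat show "0 \<le> g (i, j)" using C0 q by (simp add: g_def h_def)
    qed
    thus ?thesis by simp
  qed
  have le: "ennreal (TDGD q x * real (length (golomb_pair k x))) \<le> ennreal (g x)" for x
  proof (cases x)
    case (Pair i j)
    have li: "real (length (golomb k i)) \<le> real (2 * k + 1) * real (Suc i)"
      proof -
      have "length (golomb k i) \<le> (2 * k + 1) * Suc i"
        using len_golomb_le[OF k, of i] by (simp add: algebra_simps)
      thus ?thesis by (metis of_nat_le_iff of_nat_mult)
    qed
    have lj: "real (length (golomb k j)) \<le> real (2 * k + 1) * real (Suc j)"
      proof -
      have "length (golomb k j) \<le> (2 * k + 1) * Suc j"
        using len_golomb_le[OF k, of j] by (simp add: algebra_simps)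
      thus ?thesis by (metis of_nat_le_iff of_nat_mult)
    qed
    have xy: "real (Suc i) + real (Suc j) \<le> 2 * (real (Suc i) * real (Suc j))"
      by (simp add: algebra_simps)
    have "real (length (golomb k i)) + real (length (golomb k j)) \<le> real (2 * k + 1) * real (Suc i) + real (2 * k + 1) * real (Suc j)"
      using li lj by linarith
    also have "\<dots> = real (2 * k + 1) * (real (Suc i) + real (Suc j))" by (simp add: algebra_simps)
    also have "\<dots> \<le> real (2 * k + 1) * (2 * (real (Suc i) * real (Suc j)))"
      by (rule mult_left_mono[OF xy]) simp
    finally have "real (length (golomb k i)) + real (length (golomb k j)) \<le> 2 * real (2 * k + 1) * (real (Suc i) * real (Suc j))"
      by (simp add: algebra_simps)
    hence "(1 - q)^2 * q^(i+j) * (real (length (golomb k i)) + real (length (golomb k j))) \<le>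
           (1 - q)^2 * q^(i+j) * (2 * real (2 * k + 1) * (real (Suc i) * real (Suc j)))"
      using q by (intro mult_left_mono) auto
    thus ?thesis using Pair
      by (intro ennreal_leI) (simp add: TDGD_def len_pair g_def C_def h_def power_add algebra_simps)
  qed
  have "exp_len (TDGD q) (golomb_pair k) \<le> infsum (ennreal \<circ> g) UNIV"
    unfolding exp_len_def
    by (rule infsum_mono[OF nonneg_summable_on_complete nonneg_summable_on_complete]) (use le in auto)
  also have "\<dots> = ennreal (infsum g UNIV)"
  proof (rule infsum_comm_additive_general)
    have g0: "g x \<ge> 0" for x using C0 q by (auto simp: g_def h_def split: prod.splits)
    show "sum (ennreal \<circ> g) F = ennreal (sum g F)" for F
      using g0 by (simp add: comp_def sum_ennreal)
  qed (auto simp: gs intro!: continuous_intros)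
  finally show ?thesis by (auto simp: top_unique)
qed

lemma exists_bad_pair:
  assumes k: "k \<ge> 3"
  shows "\<exists>a b. fst a + snd a < fst b + snd b \<and>
     length (golomb_pair k b) < length (golomb_pair k a)"
proof -
  define f where "f = flog2 k"
  define c where "c = clog2 k"
  define u where "u = 2 ^ c - k"
  have k1: "k \<ge> 1" using k by simp
  have F1: "2 ^ f \<le> k" using flog2_le[OF k1] by (simp add: f_def)
  have F2: "k \<le> 2 ^ c" using clog2_bounds(1)[OF k1] by (simp add: c_def)
  have F3: "2 ^ c < 2 * k" using clog2_bounds(2)[OF k1] by (simp add: c_def)
  have uk: "u < k" using F3 by (simp add: u_def)
  have fc: "f < c" if "u > 0"
  proof -
    have "k < 2 ^ c" using that by (simp add: u_def)
    hence "(2::nat) ^ f < 2 ^ c" using F1 by linarith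
    thus ?thesis using power_less_imp_less_exp[of "2::nat" f c] by simp
  qed
  have L: "length (golomb_pair k (i, j)) =
     (if i mod k < u then f else c) + i div k + 1 + ((if j mod k < u then f else c) + j div k + 1)" for i j
    by (simp add: len_pair len_golomb len_QU f_def c_def u_def)
  consider "u = 0" | "u = 1" | "u = 2" | "u \<ge> 3" by linarith
  then show ?thesis
  proof cases
    case 1
    have "length (golomb_pair k (2, k - 1)) < length (golomb_pair k (0, k))"
      unfolding L using k 1 by simp
    moreover have "fst (0::nat, k) + snd (0::nat, k) < fst (2::nat, k - 1) + snd (2::nat, k - 1)" using k by simp
    ultimately show ?thesis by blast
  next
    case 2
    have "length (golomb_pair k (0, 3)) < length (golomb_pair k (1, 1))"
    proof (cases "k = 3")
      case True
      then show ?thesis unfolding L using 2 fc by simp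
    next
      case False
      then show ?thesis unfolding L using 2 fc k by simp
    qed
    moreover have "fst (1::nat, 1::nat) + snd (1::nat, 1::nat) < fst (0::nat, 3::nat) + snd (0::nat, 3::nat)" by simp
    ultimately show ?thesis by blast
  next
    case 3
    have k6: "k \<ge> 6"
    proof (rule ccontr)
      assume "\<not> k \<ge> 6"
      moreover have "2 ^ c = k + 2" using 3 F2 by (simp add: u_def)
      ultimately have "2 ^ c \<in> {5, 6, 7::nat}" using k by auto
      moreover have "c \<le> 2 \<or> c \<ge> 3" by linarith
      moreover have "c \<le> 2 \<Longrightarrow> (2::nat) ^ c \<le> 4"
        using power_increasing[of c 2 "2::nat"] by simp
      moreover have "c \<ge> 3 \<Longrightarrow> (2::nat) ^ c \<ge> 8"
        using power_increasing[of 3 c "2::nat"] by simp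
      ultimately show False by auto
    qed
    have "length (golomb_pair k (0, 5)) < length (golomb_pair k (2, 2))"
      unfolding L using 3 fc k6 by simp
    moreover have "fst (2::nat, 2::nat) + snd (2::nat, 2::nat) < fst (0::nat, 5::nat) + snd (0::nat, 5::nat)" by simp
    ultimately show ?thesis by blast
  next
    case 4
    have "length (golomb_pair k (2, u - 1)) < length (golomb_pair k (0, u))"
      unfolding L using 4 fc uk by simp
    moreover have "fst (0::nat, u) + snd (0::nat, u) < fst (2::nat, u - 1) + snd (2::nat, u - 1)" using 4 by simp
    ultimately show ?thesis by blast
  qed
qed

theorem corollary1:
  fixes k :: nat and q :: real
  assumes "k \<ge> 3"
    and "q = 2 powr (- 1 / real k)"
  shows "\<not> optimal (TDGD q) (golomb_pair k)"
proof -
  have q0: "0 < q" using assms(2) by simp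
  have q1: "q < 1" using assms by (simp add: powr_less_one)
  obtain a b where s: "fst a + snd a < fst b + snd b"
    and l: "length (golomb_pair k b) < length (golomb_pair k a)"
    using exists_bad_pair[OF assms(1)] by blast
  have T: "TDGD q x = (1 - q)^2 * q ^ (fst x + snd x)" for x by (cases x) (simp add: TDGD_def)
  have "q ^ (fst b + snd b) < q ^ (fst a + snd a)"
    using s q0 q1 by (intro power_strict_decreasing) auto
  hence P: "TDGD q b < TDGD q a" using q1 unfolding T by (intro mult_strict_left_mono) auto
  show ?thesis
  proof (rule swap_improves)
    show "exp_len (TDGD q) (golomb_pair k) \<noteq> \<infinity>"
      using exp_len_fin[OF q0 q1] assms(1) by simp
    show "a \<noteq> b" using s by auto
    show "0 \<le> TDGD q b" unfolding T using q0 by simp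
  qed (use P l in auto)
qed

end
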